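(* Let $X_1,\ldots,X_n$ be independent and uniformly distributed on $\{1,\ldots,n\}$ under $\mathbb{P}$. For a prime $p$ let $Y_p:=\#\{1\le i\le n:p\mid X_i\}$ and $S(k_1,k_2):=\{p\in\mathcal{P}:k_1<p\le k_2\}$. Then for every $\epsilon>0$, for all sufficiently large $k_1\le k_2$ and all sufficiently large $n\ge k_2$, \[ \frac1n\log\mathbb{P}\left(\sum_{p\in S(k_1,k_2)}Y_{p}^{2}>\epsilon n^{2}\right)\leq4\log\log k_{2}+4-\frac{\log(k_{1})}{8}\epsilon. \]
   Context: $\mathcal{P}$ denotes the set of primes. (The paper's displayed statement omits the factor $\frac1n\log$, which its proof establishes.) *)

theory Defs
  imports "HOL-Probability.Probability"
begin

definition X_dist :: "nat \<Rightarrow> (nat \<Rightarrow> nat) pmf" where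
  "X_dist n = Pi_pmf {1..n} 0 (\<lambda>_. pmf_of_set {1..n})"

definition Y :: "nat \<Rightarrow> nat \<Rightarrow> (nat \<Rightarrow> nat) \<Rightarrow> nat" where
  "Y n p X = card {i \<in> {1..n}. p dvd X i}"

definition S :: "nat \<Rightarrow> nat \<Rightarrow> nat set" where
  "S k1 k2 = {p. prime p \<and> k1 < p \<and> p \<le> k2}"

end

theory Submission
  imports Defs "HOL-Real_Asymp.Real_Asymp"
begin

lemma prod_primes_dvd:
  fixes B :: "nat set"
  assumes "finite B" "\<forall>p\<in>B. prime p" "\<forall>p\<in>B. p dvd x"
  shows "\<Prod>B dvd x"
  using assms
proof (induction B rule: finite_induct)
  case empty then show ?case by simp
next
  case (insert p B)
  have "\<not> p dvd \<Prod>B"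
  proof
    assume "p dvd \<Prod>B"
    then obtain q where "q \<in> B" "p dvd q" using insert prime_dvd_prod_iff[of B p id] by auto
    then have "p = q" using insert by (metis insert_iff primes_dvd_imp_eq)
    then show False using insert \<open>q\<in>B\<close> by auto
  qed
  then have "coprime p (\<Prod>B)" using insert by (simp add: prime_imp_coprime)
  then show ?case using insert by (simp add: divides_mult)
qed

lemma card_multiples:
  fixes d n :: nat
  assumes "d \<ge> 1"
  shows "card {x\<in>{1..n}. d dvd x} = n div d"
proof -
  have "{x\<in>{1..n}. d dvd x} = (\<lambda>k. d*k) ` {1..n div d}"
  proof (intro equalityI subsetI)
    fix x assume "x \<in> {x\<in>{1..n}. d dvd x}"
    then obtain k where k: "x = d*k" "1 \<le> d*k" "d*k \<le> n" by auto
    then have "1 \<le> k" by (cases k) auto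
    moreover have "k \<le> n div d" using k assms
      by (metis div_le_mono nonzero_mult_div_cancel_left not_one_le_zero)
    ultimately show "x \<in> (\<lambda>k. d*k) ` {1..n div d}" using k by auto
  next
    fix x assume "x \<in> (\<lambda>k. d*k) ` {1..n div d}"
    then obtain k where k0: "k \<in> {1..n div d}" and k3: "x = d*k" by blast
    then have k: "x = d*k" "1 \<le> k" "k \<le> n div d" by auto
    have "d * k \<le> d * (n div d)" using k by simp
    also have "\<dots> \<le> n" by simp
    finally show "x \<in> {x\<in>{1..n}. d dvd x}" using k assms by auto
  qed
  moreover have "inj_on (\<lambda>k. d*k) {1..n div d}" using assms by (auto simp: inj_on_def)
  ultimately show ?thesis by (simp add: card_image)
qed

lemma sum_ln_div:
  fixes N :: nat
  assumes "N \<ge> 1"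
  shows "(\<Sum>p\<in>{p. prime p \<and> p \<le> N}. ln (real p) * real (N div p)) \<le> real N * ln (real N)"
proof -
  define P where "P = {p::nat. prime p \<and> p \<le> N}"
  have finP: "finite P" unfolding P_def by (rule finite_subset[of _ "{..N}"]) auto
  have "(\<Sum>p\<in>P. ln (real p) * real (N div p)) =
        (\<Sum>p\<in>P. \<Sum>m\<in>{1..N}. if p dvd m then ln (real p) else 0)"
  proof (rule sum.cong[OF refl])
    fix p assume "p \<in> P"
    then have "p \<ge> 1" unfolding P_def using prime_ge_1_nat by auto
    have "(\<Sum>m\<in>{1..N}. if p dvd m then ln (real p) else 0) = (\<Sum>m\<in>{x\<in>{1..N}. p dvd x}. ln (real p))"
      by (subst sum.inter_filter[symmetric]) auto
    also have "\<dots> = ln (real p) * real (N div p)" using card_multiples[OF \<open>p\<ge>1\<close>, of N] by simp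
    finally show "ln (real p) * real (N div p) = (\<Sum>m\<in>{1..N}. if p dvd m then ln (real p) else 0)" by simp
  qed
  also have "\<dots> = (\<Sum>m\<in>{1..N}. \<Sum>p\<in>P. if p dvd m then ln (real p) else 0)"
    by (rule sum.swap)
  also have "\<dots> \<le> (\<Sum>m\<in>{1..N}. ln (real m))"
  proof (rule sum_mono)
    fix m assume m: "m \<in> {1..N}"
    define B where "B = {p\<in>P. p dvd m}"
    have finB: "finite B" using finP unfolding B_def by auto
    have "(\<Sum>p\<in>P. if p dvd m then ln (real p) else 0) = (\<Sum>p\<in>B. ln (real p))"
      unfolding B_def by (simp add: sum.inter_filter finP)
    also have "\<dots> = ln (real (\<Prod>B))"
    proof -
      have "\<forall>p\<in>B. real p > 0" unfolding B_def P_def using prime_gt_0_nat by auto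
      then have "ln (\<Prod>p\<in>B. real p) = (\<Sum>p\<in>B. ln (real p))" using finB by (simp add: ln_prod)
      then show ?thesis by simp
    qed
    also have "\<dots> \<le> ln (real m)"
    proof -
      have "\<Prod>B dvd m" using prod_primes_dvd[OF finB] unfolding B_def P_def by auto
      then have "\<Prod>B \<le> m" using m by (intro dvd_imp_le) auto
      moreover have "\<Prod>B > 0" using finB unfolding B_def P_def by (simp add: prime_gt_0_nat)
      ultimately have "real (\<Prod>B) \<le> real m" "real (\<Prod>B) > 0" by (simp_all only: of_nat_le_iff of_nat_0_less_iff)
      then show ?thesis by (subst ln_le_cancel_iff) auto
    qed
    finally show "(\<Sum>p\<in>P. if p dvd m then ln (real p) else 0) \<le> ln (real m)" .
  qed
  also have "\<dots> \<le> (\<Sum>m\<in>{1..N}. ln (real N))"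
    by (rule sum_mono) auto
  also have "\<dots> = real N * ln (real N)" by simp
  finally show ?thesis unfolding P_def .
qed

lemma sum_lnp_over_p:
  fixes N :: nat
  assumes "N \<ge> 1"
  shows "(\<Sum>p\<in>{p. prime p \<and> p \<le> N}. ln (real p) / real p) \<le> 2 * ln (real N)"
proof -
  define P where "P = {p::nat. prime p \<and> p \<le> N}"
  have "(\<Sum>p\<in>P. ln (real p) / real p) \<le> (\<Sum>p\<in>P. 2 / real N * (ln (real p) * real (N div p)))"
  proof (rule sum_mono)
    fix p assume "p \<in> P"
    then have p: "prime p" "p \<le> N" unfolding P_def by auto
    have p2: "p \<ge> 2" using p prime_ge_2_nat by auto
    have "N div p > 0" using p p2 by (simp add: div_greater_zero_iff)
    then have q1: "N div p \<ge> 1" by simp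
    have "N = p * (N div p) + N mod p" by simp
    moreover have "N mod p < p" using p2 by simp
    ultimately have "N < p * (N div p) + p" by linarith
    also have "\<dots> \<le> 2 * p * (N div p)" using q1 by (simp add: algebra_simps)
    finally have "real N \<le> 2 * real p * real (N div p)" by (metis of_nat_le_iff of_nat_mult of_nat_numeral less_imp_le)
    moreover have "ln (real p) \<ge> 0" using p2 by simp
    ultimately have "ln (real p) * real N \<le> ln (real p) * (2 * real p * real (N div p))"
      by (intro mult_left_mono) auto
    then show "ln (real p) / real p \<le> 2 / real N * (ln (real p) * real (N div p))"
      using assms p2 by (simp add: field_simps)
  qed
  also have "\<dots> = 2 / real N * (\<Sum>p\<in>P. ln (real p) * real (N div p))"
    by (simp add: sum_distrib_left)
  also have "\<dots> \<le> 2 / real N * (real N * ln (real N))"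
    using sum_ln_div[OF assms] unfolding P_def by (intro mult_left_mono) auto
  also have "\<dots> = 2 * ln (real N)" using assms by simp
  finally show ?thesis unfolding P_def .
qed

lemma finite_S[simp]: "finite (S a b)"
  unfolding S_def by (rule finite_subset[of _ "{..b}"]) auto

lemma recip_sum_le:
  assumes "a \<ge> 2" "b \<ge> 1"
  shows "(\<Sum>p\<in>S a b. 1 / real p) \<le> 2 * ln (real b) / ln (real a)"
proof -
  have la: "ln (real a) > 0" using assms by simp
  have nonneg: "0 \<le> ln (real p) / real p" if "prime p" for p
  proof -
    have "real p \<ge> 1" using prime_ge_1_nat[OF that] by simp
    then show ?thesis by (simp add: divide_nonneg_nonneg)
  qed
  have "(\<Sum>p\<in>S a b. 1 / real p) \<le> (\<Sum>p\<in>S a b. (ln (real p) / real p) / ln (real a))"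
  proof (rule sum_mono)
    fix p assume "p \<in> S a b"
    then have "a < p" unfolding S_def by auto
    then have "ln (real a) \<le> ln (real p)" using assms by simp
    then show "1 / real p \<le> (ln (real p) / real p) / ln (real a)"
      using la \<open>a<p\<close> by (simp add: field_simps)
  qed
  also have "\<dots> = (\<Sum>p\<in>S a b. ln (real p) / real p) / ln (real a)"
    by (simp add: sum_divide_distrib)
  also have "\<dots> \<le> (\<Sum>p\<in>{p. prime p \<and> p \<le> b}. ln (real p) / real p) / ln (real a)"
  proof (intro divide_right_mono sum_mono2)
    show "finite {p. prime p \<and> p \<le> b}" by (rule finite_subset[of _ "{..b}"]) auto
  qed (auto simp: S_def la less_imp_le dest: prime_gt_0_nat)
  also have "\<dots> \<le> 2 * ln (real b) / ln (real a)"
    using sum_lnp_over_p[OF assms(2)] la by (intro divide_right_mono) auto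
  finally show ?thesis .
qed

lemma recip_sum_sq:
  assumes "a \<ge> 2" "b \<le> a^2"
  shows "(\<Sum>p\<in>S a b. 1 / real p) \<le> 4"
proof (cases "b = 0")
  case True
  then have "S a b = {}" unfolding S_def by auto
  then show ?thesis by simp
next
  case False
  have la: "ln (real a) > 0" using assms by simp
  have "real b \<le> real a ^ 2" using assms(2) by (metis of_nat_le_iff of_nat_power)
  then have "ln (real b) \<le> ln (real a ^ 2)" by (subst ln_le_cancel_iff) (use False assms(1) in auto)
  also have "\<dots> = 2 * ln (real a)" using assms by (simp add: ln_realpow)
  finally have "2 * ln (real b) / ln (real a) \<le> 4" using la by (simp add: field_simps)
  moreover have "(\<Sum>p\<in>S a b. 1 / real p) \<le> 2 * ln (real b) / ln (real a)"
    using recip_sum_le[OF assms(1), of b] False by simp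
  ultimately show ?thesis by linarith
qed

lemma recip_sum_iter:
  assumes "a \<ge> 2"
  shows "b \<le> a^(2^j) \<Longrightarrow> (\<Sum>p\<in>S a b. 1 / real p) \<le> 4 * real j"
proof (induction j arbitrary: b)
  case 0
  then have "S a b = {}" unfolding S_def by auto
  then show ?case by simp
next
  case (Suc j)
  define c where "c = a^(2^j)"
  have ac: "a \<le> c" unfolding c_def using assms
    by (intro self_le_power) auto
  have c2: "c \<ge> 2" using ac assms by simp
  have split: "S a b = S a (min b c) \<union> S c b" using ac unfolding S_def by auto
  have disj: "S a (min b c) \<inter> S c b = {}" unfolding S_def by auto
  have "(\<Sum>p\<in>S a b. 1 / real p) = (\<Sum>p\<in>S a (min b c). 1 / real p) + (\<Sum>p\<in>S c b. 1 / real p)"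
    by (subst split, rule sum.union_disjoint) (auto simp: disj)
  also have "\<dots> \<le> 4 * real j + 4"
  proof (rule add_mono)
    show "(\<Sum>p\<in>S a (min b c). 1 / real p) \<le> 4 * real j" using Suc.IH[of "min b c"] c_def by simp
    have "a^(2^Suc j) = c^2" unfolding c_def by (metis power_mult power_Suc2)
    then have "b \<le> c^2" using Suc.prems by simp
    then show "(\<Sum>p\<in>S c b. 1 / real p) \<le> 4" using recip_sum_sq[OF c2] by simp
  qed
  finally show ?case by simp
qed

lemma recip_sum_lnln:
  assumes "3 \<le> a" "a \<le> b"
  shows "(\<Sum>p\<in>S a b. 1 / real p) \<le> 6 * ln (ln (real b)) + 4"
proof -
  have b3: "real b \<ge> 3" using assms by simp
  have lb: "ln (real b) \<ge> 1"
  proof -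
    have "exp 1 \<le> real b" using exp_le b3 by linarith
    then have "ln (exp 1) \<le> ln (real b)" by (subst ln_le_cancel_iff) (use b3 in auto)
    then show ?thesis by simp
  qed
  define j where "j = nat \<lceil>log 2 (ln (real b))\<rceil>"
  have lg0: "log 2 (ln (real b)) \<ge> 0" using lb by simp
  have j1: "real j \<le> log 2 (ln (real b)) + 1" unfolding j_def using lg0 by linarith
  have j2: "real j \<ge> log 2 (ln (real b))" unfolding j_def using lg0 by linarith
  have "ln (real b) = 2 powr (log 2 (ln (real b)))" using lb by simp
  also have "\<dots> \<le> 2 powr (real j)" using j2 by (intro powr_mono) auto
  also have "\<dots> = real (2^j)" by (simp add: powr_realpow)
  finally have A: "ln (real b) \<le> real (2^j)" .
  have "real b = exp (ln (real b))" using b3 by simp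
  also have "\<dots> \<le> exp (real (2^j))" using A by simp
  also have "\<dots> = exp 1 ^ (2^j)" using exp_of_nat_mult[of "2^j" 1] by simp
  also have "\<dots> \<le> real a ^ (2^j)"
  proof (rule power_mono)
    show "exp 1 \<le> real a" using assms exp_le by linarith
  qed simp
  finally have "b \<le> a^(2^j)" by (metis of_nat_le_iff of_nat_power)
  then have "(\<Sum>p\<in>S a b. 1 / real p) \<le> 4 * real j" using recip_sum_iter assms by simp
  also have "\<dots> \<le> 4 * (ln (ln (real b)) / ln 2) + 4" using j1 by (simp add: log_def)
  also have "\<dots> \<le> 6 * ln (ln (real b)) + 4"
  proof -
    have "ln (ln (real b)) \<ge> 0" using lb by simp
    moreover have "ln (2::real) \<ge> 2/3" using ln_2_less_1 ln2_ge_two_thirds by auto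
    moreover have "(0::real) < ln 2" by simp
    ultimately have "ln (ln (real b)) * 1 \<le> ln (ln (real b)) * (3/2 * ln 2)"
      by (intro mult_left_mono) auto
    then have "ln (ln (real b)) / ln 2 \<le> ln (ln (real b)) * (3/2)"
      using \<open>(0::real) < ln 2\<close> by (simp add: divide_le_eq)
    then show ?thesis by simp
  qed
  finally show ?thesis .
qed

lemma prod_of_bool_real:
  "finite B \<Longrightarrow> (\<Prod>p\<in>B. (of_bool (P p)::real)) = of_bool (\<forall>p\<in>B. P p)"
  by (induction B rule: finite_induct) auto

lemma mgf1:
  fixes T :: "nat set" and z :: real and n :: nat
  assumes fin: "finite T" and pr: "\<forall>p\<in>T. prime p" and z: "z \<ge> 1"
  shows "(\<Sum>x\<in>{1..n}. z ^ card {p\<in>T. p dvd x}) \<le> real n * exp ((z - 1) * (\<Sum>p\<in>T. 1 / real p))"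
proof -
  have eq1: "z ^ card {p\<in>T. p dvd x} = (\<Sum>B\<in>Pow T. (z-1)^card B * of_bool (\<forall>p\<in>B. p dvd x))" for x
  proof -
    have "(\<Prod>p\<in>T. (z-1) * of_bool (p dvd x) + 1) = (\<Prod>p\<in>{p\<in>T. p dvd x}. (z-1) * of_bool (p dvd x) + 1)"
      by (rule prod.mono_neutral_right) (auto simp: fin)
    also have "\<dots> = (\<Prod>p\<in>{p\<in>T. p dvd x}. z)" by (rule prod.cong) auto
    also have "\<dots> = z ^ card {p\<in>T. p dvd x}" by simp
    finally have "z ^ card {p\<in>T. p dvd x} = (\<Prod>p\<in>T. (z-1) * of_bool (p dvd x) + 1)" by simp
    also have "\<dots> = (\<Sum>B\<in>Pow T. (\<Prod>p\<in>B. (z-1) * of_bool (p dvd x)) * (\<Prod>p\<in>T-B. 1))"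
      by (rule prod_add[OF fin])
    also have "\<dots> = (\<Sum>B\<in>Pow T. (z-1)^card B * of_bool (\<forall>p\<in>B. p dvd x))"
    proof (rule sum.cong[OF refl])
      fix B assume "B \<in> Pow T"
      then have "finite B" using fin finite_subset by auto
      then show "(\<Prod>p\<in>B. (z-1) * of_bool (p dvd x)) * (\<Prod>p\<in>T-B. 1) = (z-1)^card B * of_bool (\<forall>p\<in>B. p dvd x)"
        by (simp add: prod.distrib prod_of_bool_real)
    qed
    finally show ?thesis .
  qed
  have "(\<Sum>x\<in>{1..n}. z ^ card {p\<in>T. p dvd x}) =
        (\<Sum>x\<in>{1..n}. \<Sum>B\<in>Pow T. (z-1)^card B * of_bool (\<forall>p\<in>B. p dvd x))"
    by (simp only: eq1)
  also have "\<dots> = (\<Sum>B\<in>Pow T. \<Sum>x\<in>{1..n}. (z-1)^card B * of_bool (\<forall>p\<in>B. p dvd x))"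
    by (rule sum.swap)
  also have "\<dots> \<le> (\<Sum>B\<in>Pow T. real n * (\<Prod>p\<in>B. (z-1) / real p) * (\<Prod>p\<in>T-B. 1))"
  proof (rule sum_mono)
    fix B assume B: "B \<in> Pow T"
    then have finB: "finite B" using fin finite_subset by auto
    have prB: "\<forall>p\<in>B. prime p" using B pr by auto
    define d where "d = \<Prod>B"
    have d1: "d \<ge> 1" unfolding d_def using prB finB
      by (metis One_nat_def Suc_leI prime_gt_0_nat prod_pos)
    have "(\<Sum>x\<in>{1..n}. (z-1)^card B * of_bool (\<forall>p\<in>B. p dvd x)) =
          (z-1)^card B * (\<Sum>x\<in>{1..n}. of_bool (\<forall>p\<in>B. p dvd x))"
      by (simp add: sum_distrib_left)
    also have "(\<Sum>x\<in>{1..n}. (of_bool (\<forall>p\<in>B. p dvd x)::real)) = real (card ({1..n} \<inter> {x. \<forall>p\<in>B. p dvd x}))"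
      by simp
    also have "card ({1..n} \<inter> {x. \<forall>p\<in>B. p dvd x}) \<le> card {x\<in>{1..n}. d dvd x}"
      by (rule card_mono) (auto simp: d_def intro: prod_primes_dvd[OF finB prB])
    also have "\<dots> = n div d" using card_multiples[OF d1] .
    finally have "(\<Sum>x\<in>{1..n}. (z-1)^card B * of_bool (\<forall>p\<in>B. p dvd x)) \<le> (z-1)^card B * real (n div d)"
      using z by (simp add: mult_left_mono)
    also have "\<dots> \<le> (z-1)^card B * (real n / real d)"
      using z by (intro mult_left_mono of_nat_div_le_of_nat) auto
    also have "\<dots> = real n * (\<Prod>p\<in>B. (z-1) / real p) * (\<Prod>p\<in>T-B. 1)"
      by (simp add: prod_dividef d_def)
    finally show "(\<Sum>x\<in>{1..n}. (z-1)^card B * of_bool (\<forall>p\<in>B. p dvd x))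
        \<le> real n * (\<Prod>p\<in>B. (z-1) / real p) * (\<Prod>p\<in>T-B. 1)" .
  qed
  also have "\<dots> = real n * (\<Sum>B\<in>Pow T. (\<Prod>p\<in>B. (z-1) / real p) * (\<Prod>p\<in>T-B. 1))"
    by (simp add: sum_distrib_left mult.assoc)
  also have "\<dots> = real n * (\<Prod>p\<in>T. (z-1) / real p + 1)"
    by (simp add: prod_add[OF fin])
  also have "\<dots> \<le> real n * (\<Prod>p\<in>T. exp ((z-1) / real p))"
  proof (intro mult_left_mono prod_mono conjI)
    fix p assume "p \<in> T"
    show "0 \<le> (z-1) / real p + 1" using z by simp
    show "(z-1) / real p + 1 \<le> exp ((z-1) / real p)" using exp_ge_add_one_self[of "(z-1) / real p"] by (simp only: add.commute)
  qed simp
  also have "\<dots> = real n * exp ((z - 1) * (\<Sum>p\<in>T. 1 / real p))"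
    by (simp add: exp_sum[OF fin] sum_distrib_left)
  finally show ?thesis .
qed

lemma finite_set_X_dist: "n \<ge> 1 \<Longrightarrow> finite (set_pmf (X_dist n))"
  unfolding X_dist_def by (subst set_Pi_pmf) auto

lemma sumY_eq:
  assumes "finite T"
  shows "(\<Sum>p\<in>T. Y n p X) = (\<Sum>i\<in>{1..n}. card {p\<in>T. p dvd X i})"
proof -
  have "(\<Sum>p\<in>T. Y n p X) = (\<Sum>p\<in>T. \<Sum>i\<in>{1..n}. of_bool (p dvd X i))"
    by (rule sum.cong[OF refl]) (simp add: Y_def Int_def)
  also have "\<dots> = (\<Sum>i\<in>{1..n}. \<Sum>p\<in>T. of_bool (p dvd X i))" by (rule sum.swap)
  also have "\<dots> = (\<Sum>i\<in>{1..n}. card {p\<in>T. p dvd X i})"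
    using assms by (simp add: Int_def)
  finally show ?thesis .
qed

lemma tail_bound:
  fixes T :: "nat set" and z a :: real and n :: nat
  assumes fin: "finite T" and pr: "\<forall>p\<in>T. prime p" and z: "z > 1" and n: "n \<ge> 1"
  shows "measure_pmf.prob (X_dist n) {X. real (\<Sum>p\<in>T. Y n p X) \<ge> a}
           \<le> exp (real n * (z - 1) * (\<Sum>p\<in>T. 1 / real p)) / z powr a"
proof -
  define c where "c = (\<lambda>x::nat. card {p\<in>T. p dvd x})"
  define u where "u = (\<lambda>X::nat\<Rightarrow>nat. \<Prod>i\<in>{1..n}. z ^ c (X i))"
  have u_eq: "u X = z ^ (\<Sum>p\<in>T. Y n p X)" for X
    unfolding u_def c_def by (simp add: sumY_eq[OF fin] power_sum)
  have sub: "{X. real (\<Sum>p\<in>T. Y n p X) \<ge> a} \<subseteq> {X \<in> space (measure_pmf (X_dist n)). u X \<ge> z powr a}"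
  proof safe
    fix X assume "a \<le> real (\<Sum>p\<in>T. Y n p X)"
    then have "z powr a \<le> z powr real (\<Sum>p\<in>T. Y n p X)" using z by (intro powr_mono) auto
    also have "\<dots> = z ^ (\<Sum>p\<in>T. Y n p X)" using z by (intro powr_realpow) auto
    also have "\<dots> = u X" by (simp only: u_eq)
    finally show "z powr a \<le> u X" .
  qed simp
  have intg: "integrable (measure_pmf (X_dist n)) u"
    by (rule integrable_measure_pmf_finite[OF finite_set_X_dist[OF n]])
  have "measure_pmf.prob (X_dist n) {X. real (\<Sum>p\<in>T. Y n p X) \<ge> a}
        \<le> measure_pmf.prob (X_dist n) {X \<in> space (measure_pmf (X_dist n)). u X \<ge> z powr a}"
    by (rule measure_pmf.finite_measure_mono[OF sub]) simp
  also have "\<dots> \<le> measure_pmf.expectation (X_dist n) u / z powr a"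
    by (rule integral_Markov_inequality_measure[OF intg]) (use z in \<open>auto simp: u_def intro!: AE_I2 prod_nonneg\<close>)
  also have "measure_pmf.expectation (X_dist n) u =
             (\<Prod>i\<in>{1..n}. measure_pmf.expectation (pmf_of_set {1..n}) (\<lambda>v. z ^ c v))"
    unfolding u_def X_dist_def
    by (rule expectation_prod_Pi_pmf[where f = "\<lambda>_ v. z ^ c v"])
       (use z n in \<open>auto intro!: integrable_measure_pmf_finite\<close>)
  also have "\<dots> = (\<Prod>i\<in>{1..n}. (\<Sum>x\<in>{1..n}. z ^ c x) / real n)"
    using n by (simp add: integral_pmf_of_set)
  also have "\<dots> \<le> (\<Prod>i\<in>{1..n}. exp ((z - 1) * (\<Sum>p\<in>T. 1 / real p)))"
  proof (rule prod_mono, rule conjI)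
    fix i
    show "0 \<le> (\<Sum>x\<in>{1..n}. z ^ c x) / real n" using z by (auto intro!: sum_nonneg divide_nonneg_nonneg)
    have "(\<Sum>x\<in>{1..n}. z ^ c x) \<le> real n * exp ((z - 1) * (\<Sum>p\<in>T. 1 / real p))"
      unfolding c_def using mgf1[OF fin pr, of z n] z by simp
    then show "(\<Sum>x\<in>{1..n}. z ^ c x) / real n \<le> exp ((z - 1) * (\<Sum>p\<in>T. 1 / real p))"
      using n by (simp add: divide_le_eq mult.commute)
  qed
  also have "\<dots> = exp (real n * (z - 1) * (\<Sum>p\<in>T. 1 / real p))"
    by (simp add: exp_of_nat_mult[symmetric] mult.assoc)
  finally show ?thesis using z by (simp add: divide_right_mono)
qed

lemma Y_le: "Y n p X \<le> n"
proof -
  have "Y n p X \<le> card {1..n}" unfolding Y_def by (rule card_mono) auto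
  then show ?thesis by simp
qed

lemma card_S_le: "card (S k1 k2) \<le> k2"
proof -
  have "S k1 k2 \<subseteq> {1..k2}" unfolding S_def using prime_ge_1_nat by auto
  then have "card (S k1 k2) \<le> card {1..k2}" by (rule card_mono[rotated]) auto
  then show ?thesis by simp
qed

lemma combinatorial:
  fixes \<epsilon> K :: real and n :: nat and X :: "nat \<Rightarrow> nat" and A :: "nat set"
  assumes eps: "\<epsilon> > 0" and K: "K > 0" and n: "n \<ge> 1" and fin: "finite A"
    and big: "real (\<Sum>p\<in>A. (Y n p X)^2) > \<epsilon> * (real n)^2"
    and small: "\<not> real (\<Sum>p\<in>A. Y n p X) \<ge> K * real n"
  shows "\<exists>T. T \<subseteq> A \<and> real (card T) \<le> 2 * K^2 / \<epsilon> \<and> real (\<Sum>p\<in>T. Y n p X) \<ge> \<epsilon> * real n / 2"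
proof -
  define y where "y = (\<lambda>p. real (Y n p X))"
  define \<delta> where "\<delta> = \<epsilon> / (2 * K)"
  have \<delta>: "\<delta> > 0" unfolding \<delta>_def using eps K by simp
  have yle: "y p \<le> real n" for p unfolding y_def using Y_le by simp
  have y0: "y p \<ge> 0" for p unfolding y_def by simp
  have npos: "real n > 0" using n by simp
  have sumA: "(\<Sum>p\<in>A. y p) < K * real n" using small unfolding y_def by simp
  have sq: "(\<Sum>p\<in>A. (y p)^2) > \<epsilon> * (real n)^2" using big unfolding y_def by simp
  define T where "T = {p\<in>A. y p \<ge> \<delta> * real n}"
  have TA: "T \<subseteq> A" unfolding T_def by auto
  have finT: "finite T" using fin TA finite_subset by auto
  have "(\<Sum>p\<in>A-T. (y p)^2) \<le> (\<Sum>p\<in>A-T. \<delta> * real n * y p)"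
  proof (rule sum_mono)
    fix p assume "p \<in> A - T"
    then have "y p \<le> \<delta> * real n" unfolding T_def by auto
    then show "(y p)^2 \<le> \<delta> * real n * y p" using y0[of p] by (simp add: power2_eq_square mult_right_mono)
  qed
  also have "\<dots> = \<delta> * real n * (\<Sum>p\<in>A-T. y p)" by (simp add: sum_distrib_left)
  also have "\<dots> \<le> \<delta> * real n * (\<Sum>p\<in>A. y p)"
    using \<delta> npos y0 fin by (intro mult_left_mono sum_mono2) auto
  also have "\<dots> \<le> \<delta> * real n * (K * real n)"
    using \<delta> npos sumA by (intro mult_left_mono) auto
  also have "\<dots> = \<epsilon> * (real n)^2 / 2" unfolding \<delta>_def using K by (simp add: power2_eq_square field_simps)
  finally have small_part: "(\<Sum>p\<in>A-T. (y p)^2) \<le> \<epsilon> * (real n)^2 / 2" .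
  have "(\<Sum>p\<in>T. (y p)^2) \<le> (\<Sum>p\<in>T. real n * y p)"
  proof (rule sum_mono)
    fix p show "(y p)^2 \<le> real n * y p" using yle[of p] y0[of p] by (simp add: power2_eq_square mult_right_mono)
  qed
  also have "\<dots> = real n * (\<Sum>p\<in>T. y p)" by (simp add: sum_distrib_left)
  finally have big_part: "(\<Sum>p\<in>T. (y p)^2) \<le> real n * (\<Sum>p\<in>T. y p)" .
  have "(\<Sum>p\<in>A. (y p)^2) = (\<Sum>p\<in>T. (y p)^2) + (\<Sum>p\<in>A-T. (y p)^2)"
    using sum.subset_diff[OF TA fin, of "\<lambda>p. (y p)^2"] by simp
  then have "real n * (\<Sum>p\<in>T. y p) > \<epsilon> * (real n)^2 / 2" using sq small_part big_part by linarith
  then have "real n * (\<Sum>p\<in>T. y p) > real n * (\<epsilon> * real n / 2)" by (simp add: power2_eq_square mult.commute mult.left_commute)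
  then have sumT: "(\<Sum>p\<in>T. y p) > \<epsilon> * real n / 2" using npos by (simp add: mult_less_cancel_left_pos)
  have "real (card T) * (\<delta> * real n) = (\<Sum>p\<in>T. \<delta> * real n)" by simp
  also have "\<dots> \<le> (\<Sum>p\<in>T. y p)" by (rule sum_mono) (auto simp: T_def)
  also have "\<dots> \<le> (\<Sum>p\<in>A. y p)" using y0 fin TA by (intro sum_mono2) auto
  also have "\<dots> \<le> K * real n" using sumA by simp
  finally have "real (card T) * \<delta> * real n \<le> K * real n" by (simp add: mult.assoc)
  then have "real (card T) * \<delta> \<le> K" using npos by simp
  then have "real (card T) \<le> K / \<delta>" using \<delta> by (simp add: le_divide_eq)
  also have "K / \<delta> = 2 * K^2 / \<epsilon>" unfolding \<delta>_def using K eps by (simp add: power2_eq_square field_simps)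
  finally have cT: "real (card T) \<le> 2 * K^2 / \<epsilon>" .
  show ?thesis using TA cT sumT unfolding y_def by (intro exI[of _ T]) (simp add: less_imp_le)
qed

lemma main_bound:
  fixes \<epsilon> x0 :: real and K0 k1 k2 n :: nat
  assumes epos: "\<epsilon> > 0"
  and x0: "\<And>x. x \<ge> x0 \<Longrightarrow> 2 * (\<epsilon> * ln x + 16)^2 / \<epsilon> \<le> sqrt x"
  and K0_def: "K0 = max 3 (nat \<lceil>x0\<rceil>)"
  and h1: "K0 \<le> k1" and h2: "k1 \<le> k2" and h3: "k2 \<le> n" and h4: "1 \<le> n"
  shows "measure_pmf.prob (X_dist n) {X. real (\<Sum>p\<in>S k1 k2. (Y n p X)^2) > \<epsilon> * (real n)^2}
           \<le> exp (real n * (4 * ln (ln (real k2)) + 4 - ln (real k1) / 8 * \<epsilon>))"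
proof -
    define \<Phi> where "\<Phi> = 4 * ln (ln (real k2)) + 4 - ln (real k1) / 8 * \<epsilon>"
    define E where "E = {X. real (\<Sum>p\<in>S k1 k2. (Y n p X)^2) > \<epsilon> * (real n)^2}"
    have "measure_pmf.prob (X_dist n) E \<le> exp (real n * \<Phi>)"
    proof (cases "\<Phi> \<ge> 0")
      case True
      have "measure_pmf.prob (X_dist n) E \<le> 1" by simp
      also have "1 \<le> exp (real n * \<Phi>)" using True by simp
      finally show ?thesis .
    next
      case False
      have k13: "k1 \<ge> 3" using h1 unfolding K0_def by simp
      have k1x0: "real k1 \<ge> x0" using h1 unfolding K0_def by linarith
      define L where "L = ln (real k1)"
      have L0: "L > 0" unfolding L_def using k13 by simp
      have lk2: "ln (real k2) \<ge> 1"
      proof -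
        have "exp 1 \<le> real k2" using exp_le h2 k13 by linarith
        then have "ln (exp 1) \<le> ln (real k2)" by (subst ln_le_cancel_iff) (use h2 k13 in auto)
        then show ?thesis by simp
      qed
      define ll where "ll = ln (ln (real k2))"
      have ll0: "ll \<ge> 0" unfolding ll_def using lk2 by simp
      have llb: "ll \<le> \<epsilon> * L / 32" using False unfolding \<Phi>_def ll_def L_def by (simp add: mult.commute)
      define s where "s = (\<Sum>p\<in>S k1 k2. 1 / real p)"
      have s0: "s \<ge> 0" unfolding s_def by (auto intro: sum_nonneg)
      have sb: "s \<le> 6 * ll + 4" unfolding s_def ll_def using recip_sum_lnln[OF k13 h2] .
      define K where "K = 4 * s + \<epsilon> * L / 16"
      have Kpos: "K > 0" unfolding K_def using s0 L0 epos mult_pos_pos[of \<epsilon> L] by linarith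
      have Kb: "K \<le> \<epsilon> * L + 16" unfolding K_def using sb llb L0 epos mult_pos_pos[of \<epsilon> L] by linarith
      define M where "M = 2 * K^2 / \<epsilon>"
      have "K^2 \<le> (\<epsilon> * L + 16)^2" using Kpos Kb by (intro power_mono) auto
      then have "M \<le> 2 * (\<epsilon> * L + 16)^2 / \<epsilon>" unfolding M_def using epos by (simp add: divide_right_mono)
      also have "\<dots> \<le> sqrt (real k1)" unfolding L_def using x0[OF k1x0] .
      finally have Mb: "M \<le> sqrt (real k1)" .
      have finS: "finite (S k1 k2)" by simp
      have prS: "\<forall>p\<in>S k1 k2. prime p" unfolding S_def by auto
      define E1 where "E1 = {X. real (\<Sum>p\<in>S k1 k2. Y n p X) \<ge> K * real n}"
      define \<T> where "\<T> = {T. T \<subseteq> S k1 k2 \<and> real (card T) \<le> M}"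
      define ET where "ET = (\<lambda>T. {X. real (\<Sum>p\<in>T. Y n p X) \<ge> \<epsilon> * real n / 2})"
      have finT: "finite \<T>" unfolding \<T>_def by (rule finite_subset[of _ "Pow (S k1 k2)"]) auto
      have cardT: "card \<T> \<le> 2 ^ n"
      proof -
        have "card \<T> \<le> card (Pow (S k1 k2))" unfolding \<T>_def by (rule card_mono) auto
        also have "\<dots> = 2 ^ card (S k1 k2)" by (simp add: card_Pow)
        also have "\<dots> \<le> 2 ^ n" using card_S_le[of k1 k2] h3 by (intro power_increasing) auto
        finally show ?thesis .
      qed
      have sub: "E \<subseteq> E1 \<union> (\<Union>T\<in>\<T>. ET T)"
      proof
        fix X assume "X \<in> E"
        show "X \<in> E1 \<union> (\<Union>T\<in>\<T>. ET T)"
        proof (cases "X \<in> E1")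
          case False
          have "\<exists>T. T \<subseteq> S k1 k2 \<and> real (card T) \<le> 2 * K^2 / \<epsilon> \<and> real (\<Sum>p\<in>T. Y n p X) \<ge> \<epsilon> * real n / 2"
            by (rule combinatorial[OF epos Kpos h4 finS]) (use \<open>X \<in> E\<close> False in \<open>auto simp: E_def E1_def\<close>)
          then show ?thesis unfolding \<T>_def ET_def M_def by auto
        qed simp
      qed
      have P1: "measure_pmf.prob (X_dist n) E1 \<le> exp (- (real n * \<epsilon> * L / 8))"
      proof -
        have e2: "exp (2::real) \<le> 9"
        proof -
          have "exp (2::real) = exp 1 * exp 1" by (simp flip: exp_add)
          also have "\<dots> \<le> 3 * 3" using exp_le by (intro mult_mono) auto
          finally show ?thesis by simp
        qed
        have "measure_pmf.prob (X_dist n) E1 \<le> exp (real n * (exp 2 - 1) * s) / exp 2 powr (K * real n)"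
          unfolding E1_def s_def by (rule tail_bound[OF finS prS _ h4]) simp
        also have "exp 2 powr (K * real n) = exp (2 * K * real n)" by (simp add: powr_def)
        also have "exp (real n * (exp 2 - 1) * s) \<le> exp (real n * 8 * s)"
          using e2 s0 by (simp add: mult_left_mono mult_right_mono)
        then have "exp (real n * (exp 2 - 1) * s) / exp (2 * K * real n) \<le> exp (real n * 8 * s) / exp (2 * K * real n)"
          by (simp add: divide_right_mono)
        also have "\<dots> = exp (real n * 8 * s - 2 * K * real n)" by (simp add: exp_diff)
        also have "real n * 8 * s - 2 * K * real n = - (real n * \<epsilon> * L / 8)" unfolding K_def by (simp add: algebra_simps)
        finally show ?thesis .
      qed
      have P2: "measure_pmf.prob (X_dist n) (ET T) \<le> exp (real n - real n * \<epsilon> * L / 4)" if "T \<in> \<T>" for T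
      proof -
        have TS: "T \<subseteq> S k1 k2" and cT: "real (card T) \<le> M" using that unfolding \<T>_def by auto
        have finT': "finite T" using finite_subset[OF TS finS] .
        have prT: "\<forall>p\<in>T. prime p" using TS prS by auto
        define z where "z = sqrt (real k1)"
        have z1: "z > 1" unfolding z_def using k13 by simp
        have zz: "z * z = real k1" unfolding z_def by simp
        have sumb: "(\<Sum>p\<in>T. 1 / real p) \<le> (\<Sum>p\<in>T. 1 / real k1)"
        proof (rule sum_mono)
          fix p assume "p \<in> T"
          then have "k1 < p" using TS unfolding S_def by auto
          then show "1 / real p \<le> 1 / real k1" using k13 by (simp add: frac_le)
        qed
        have "(z - 1) * (\<Sum>p\<in>T. 1 / real p) \<le> z * (real (card T) / real k1)"
          using z1 sumb by (intro mult_mono) (auto intro: sum_nonneg)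
        also have "\<dots> \<le> z * (z / real k1)"
          using cT Mb z1 k13 unfolding z_def by (intro mult_left_mono divide_right_mono) auto
        also have "\<dots> = 1" using zz k13 by (simp add: field_simps)
        finally have "real n * ((z - 1) * (\<Sum>p\<in>T. 1 / real p)) \<le> real n * 1" by (intro mult_left_mono) auto
        then have ex: "exp (real n * (z - 1) * (\<Sum>p\<in>T. 1 / real p)) \<le> exp (real n)"
          by (simp add: mult.assoc)
        have "measure_pmf.prob (X_dist n) (ET T) \<le> exp (real n * (z - 1) * (\<Sum>p\<in>T. 1 / real p)) / z powr (\<epsilon> * real n / 2)"
          unfolding ET_def by (rule tail_bound[OF finT' prT z1 h4])
        also have "z powr (\<epsilon> * real n / 2) = exp (real n * \<epsilon> * L / 4)"
          unfolding z_def L_def using k13 by (simp add: powr_def ln_sqrt)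
        also have "exp (real n * (z - 1) * (\<Sum>p\<in>T. 1 / real p)) / exp (real n * \<epsilon> * L / 4) \<le> exp (real n) / exp (real n * \<epsilon> * L / 4)"
          using ex by (intro divide_right_mono) auto
        also have "\<dots> = exp (real n - real n * \<epsilon> * L / 4)" by (simp add: exp_diff)
        finally show ?thesis .
      qed
      have "measure_pmf.prob (X_dist n) E \<le> measure_pmf.prob (X_dist n) (E1 \<union> (\<Union>T\<in>\<T>. ET T))"
        by (rule measure_pmf.finite_measure_mono[OF sub]) simp
      also have "\<dots> \<le> measure_pmf.prob (X_dist n) E1 + measure_pmf.prob (X_dist n) (\<Union>T\<in>\<T>. ET T)"
        by (rule measure_Un_le) auto
      also have "measure_pmf.prob (X_dist n) (\<Union>T\<in>\<T>. ET T) \<le> (\<Sum>T\<in>\<T>. measure_pmf.prob (X_dist n) (ET T))"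
        by (rule measure_pmf.finite_measure_subadditive_finite[OF finT]) auto
      also have "\<dots> \<le> (\<Sum>T\<in>\<T>. exp (real n - real n * \<epsilon> * L / 4))" by (rule sum_mono) (rule P2)
      also have "\<dots> = real (card \<T>) * exp (real n - real n * \<epsilon> * L / 4)" by simp
      also have "\<dots> \<le> exp (real n) * exp (real n - real n * \<epsilon> * L / 4)"
      proof (rule mult_right_mono)
        have "real (card \<T>) \<le> 2 ^ n" using cardT by (metis of_nat_le_iff of_nat_numeral of_nat_power)
        also have "(2::real) ^ n \<le> exp 1 ^ n"
          using exp_ge_add_one_self[of 1] by (intro power_mono) auto
        also have "\<dots> = exp (real n)" by (simp add: exp_of_nat_mult[symmetric])
        finally show "real (card \<T>) \<le> exp (real n)" .
      qed simp
      also have "exp (real n) * exp (real n - real n * \<epsilon> * L / 4) = exp (2 * real n - real n * \<epsilon> * L / 4)"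
        by (simp flip: exp_add)
      finally have tot: "measure_pmf.prob (X_dist n) E \<le> exp (- (real n * \<epsilon> * L / 8)) + exp (2 * real n - real n * \<epsilon> * L / 4)"
        using P1 by linarith
      have nel: "real n * \<epsilon> * L \<ge> 0" using epos L0 by simp
      have a1: "exp (- (real n * \<epsilon> * L / 8)) \<le> exp (2 * real n - real n * \<epsilon> * L / 8)" by simp
      have a2: "exp (2 * real n - real n * \<epsilon> * L / 4) \<le> exp (2 * real n - real n * \<epsilon> * L / 8)" using nel by (simp add: mult_ac)
      have a3: "2 \<le> exp (2 * real n)"
        using exp_ge_add_one_self[of "2 * real n"] h4 by linarith
      have "exp (- (real n * \<epsilon> * L / 8)) + exp (2 * real n - real n * \<epsilon> * L / 4)
            \<le> 2 * exp (2 * real n - real n * \<epsilon> * L / 8)" using a1 a2 by linarith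
      also have "\<dots> \<le> exp (2 * real n) * exp (2 * real n - real n * \<epsilon> * L / 8)"
        using a3 by (intro mult_right_mono) auto
      also have "\<dots> = exp (4 * real n - real n * \<epsilon> * L / 8)" by (simp flip: exp_add)
      also have "\<dots> \<le> exp (real n * \<Phi>)"
      proof -
        have "real n * \<Phi> = 4 * real n * ll + 4 * real n - real n * \<epsilon> * L / 8"
          unfolding \<Phi>_def ll_def L_def by (simp add: algebra_simps)
        moreover have "4 * real n * ll \<ge> 0" using ll0 by simp
        ultimately show ?thesis by simp
      qed
      finally show ?thesis using tot by linarith
    qed
    then show ?thesis unfolding E_def \<Phi>_def .
qed

theorem lemma3p6:
  fixes \<epsilon> :: real
  assumes "\<epsilon> > 0"
  shows "\<exists>K N::nat. \<forall>k1 k2 n::nat. K \<le> k1 \<longrightarrow> k1 \<le> k2 \<longrightarrow> k2 \<le> n \<longrightarrow> N \<le> n \<longrightarrow>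
           measure_pmf.prob (X_dist n)
             {X. real (\<Sum>p\<in>S k1 k2. (Y n p X)^2) > \<epsilon> * (real n)^2}
           \<le> exp (real n * (4 * ln (ln (real k2)) + 4 - ln (real k1) / 8 * \<epsilon>))"
proof -
  have ev: "eventually (\<lambda>x. 2 * (\<epsilon> * ln x + 16)^2 / \<epsilon> \<le> sqrt x) at_top"
    using assms by real_asymp
  then obtain x0 where x0: "\<And>x. x \<ge> x0 \<Longrightarrow> 2 * (\<epsilon> * ln x + 16)^2 / \<epsilon> \<le> sqrt x"
    by (auto simp: eventually_at_top_linorder)
  show ?thesis
    using main_bound[OF assms x0 refl] by blast
qed

end
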